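(* Let $X_1,X_2,\ldots$ be independent random variables, each with density $e^{x-1}$ for $x\le1$ and $0$ for $x>1$; let $S_0=0$, $S_j=X_1+\cdots+X_j$, and let $f_m$ denote the density of $S_m$, i.e. $f_m(x)=\frac{(m-x)^{m-1}}{e^{m-x}(m-1)!}$ for $x\le m$ and $f_m(x)=0$ for $x>m$. For integers $m\ge1$ and reals $x,y$ define $$R_m(x,y)=\frac{d}{dx}\mathbf{P}\Big[\max_{0\le j\le m-1}S_j<y,\ S_m\le x\Big],$$ the density of the event $\{\max_{0\le j\le m-1}S_j<y,\ S_m=x\}$. Then for every integer $n\ge2$, real $y>0$, real $x$ and real $a\ge1$, $$R_n(x,y)=f_n(x)-f_n(y+a)+\int_0^1\sum_{k=1}^{n-1}R_k(y+\xi,y)\big(f_{n-k}(a-\xi)-f_{n-k}(x-y-\xi)\big)\,d\xi.$$ *)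

theory Defs
  imports "HOL-Probability.Probability"
begin

definition psum :: "(nat \<Rightarrow> 'a \<Rightarrow> real) \<Rightarrow> nat \<Rightarrow> 'a \<Rightarrow> real" where
  "psum X j \<omega> = (\<Sum>i=1..j. X i \<omega>)"

definition fdens :: "nat \<Rightarrow> real \<Rightarrow> real" where
  "fdens m x = (if x \<le> real m
     then (real m - x) ^ (m - 1) / (exp (real m - x) * fact (m - 1)) else 0)"

definition Rdens :: "'a measure \<Rightarrow> (nat \<Rightarrow> 'a \<Rightarrow> real) \<Rightarrow> nat \<Rightarrow> real \<Rightarrow> real \<Rightarrow> real" where
  "Rdens M X m x y = deriv (\<lambda>t. measure M
      {\<omega> \<in> space M. (\<forall>j<m. psum X j \<omega> < y) \<and> psum X m \<omega> \<le> t}) x"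

end

theory Submission
  imports Defs
begin

definition f1 :: "real \<Rightarrow> real" where
  "f1 t = (if t \<le> 1 then exp (t - 1) else 0)"

lemma f1_meas[measurable]: "f1 \<in> borel_measurable borel"
  unfolding f1_def by measurable

lemma f1_nonneg: "0 \<le> f1 t" unfolding f1_def by auto

lemma f1_le1: "f1 t \<le> 1" unfolding f1_def by auto

lemma fdens_one: "fdens (Suc 0) = f1"
  by (rule ext) (simp add: fdens_def f1_def exp_diff exp_minus field_simps)

lemma fdens_meas[measurable]: "fdens m \<in> borel_measurable borel"
  unfolding fdens_def by measurable

lemma fdens_nonneg: "0 \<le> fdens m t" unfolding fdens_def by auto

lemma pow_fact_le_exp: assumes "(0::real) \<le> u" shows "u ^ n / fact n \<le> exp u"
proof -
  have s: "summable (\<lambda>k. u ^ k /\<^sub>R fact k)" using exp_converges sums_summable by blast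
  have "(\<Sum>k\<in>{n}. u ^ k /\<^sub>R fact k) \<le> suminf (\<lambda>k. u ^ k /\<^sub>R fact k)"
    by (rule sum_le_suminf[OF s]) (use assms in auto)
  also have "\<dots> = exp u" using exp_converges sums_unique by metis
  finally show ?thesis by (simp add: divide_inverse mult.commute)
qed

lemma fdens_le1: "fdens m t \<le> 1"
proof (cases "t \<le> real m")
  case True
  have "(real m - t) ^ (m - 1) / fact (m - 1) \<le> exp (real m - t)"
    using True by (intro pow_fact_le_exp) auto
  then show ?thesis using True
    by (simp add: fdens_def divide_simps mult.commute)
qed (simp add: fdens_def)

lemma fdens_isCont: assumes "w \<noteq> real m" shows "isCont (fdens m) w"
proof (cases "w < real m")
  case True
  have "continuous_on {..<real m} (fdens m)"
  proof (rule continuous_on_cong[THEN iffD1])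
    show "continuous_on {..<real m} (\<lambda>t. (real m - t) ^ (m - 1) / (exp (real m - t) * fact (m - 1)))"
      by (intro continuous_intros) auto
  qed (auto simp: fdens_def)
  then show ?thesis using True continuous_on_eq_continuous_at[of "{..<real m}"] by auto
next
  case False
  then have w: "w \<in> {real m<..}" using assms by auto
  have "continuous_on {real m<..} (fdens m)"
  proof (rule continuous_on_cong[THEN iffD1])
    show "continuous_on {real m<..} (\<lambda>t. 0::real)" by (intro continuous_intros)
  qed (auto simp: fdens_def)
  then show ?thesis using w continuous_on_eq_continuous_at[of "{real m<..}"] by auto
qed

lemma f1_isCont: "w \<noteq> 1 \<Longrightarrow> isCont f1 w"
  using fdens_isCont[of w "Suc 0"] by (simp add: fdens_one)

context prob_space
begin

lemma GL:
  fixes g :: "real \<Rightarrow> ennreal" and v :: "'b \<Rightarrow> real"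
  assumes ind: "indep_var N U N' V'" and v[measurable]: "v \<in> borel_measurable N'"
    and dist: "distributed M lborel (\<lambda>\<omega>. v (V' \<omega>)) g"
    and Phi[measurable]: "Phi \<in> borel_measurable (N \<Otimes>\<^sub>M borel)"
  shows "(\<integral>\<^sup>+\<omega>. Phi (U \<omega>, v (V' \<omega>)) \<partial>M) = (\<integral>\<^sup>+\<omega>. (\<integral>\<^sup>+x. g x * Phi (U \<omega>, x) \<partial>lborel) \<partial>M)"
proof -
  have U[measurable]: "U \<in> measurable M N" and V[measurable]: "V' \<in> measurable M N'"
    using ind by (auto dest: indep_var_rv1 indep_var_rv2)
  have eq: "distr M N U \<Otimes>\<^sub>M distr M N' V' = distr M (N \<Otimes>\<^sub>M N') (\<lambda>x. (U x, V' x))"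
    using ind by (simp add: indep_var_distribution_eq)
  have g[measurable]: "g \<in> borel_measurable borel"
    using distributed_borel_measurable[OF dist] by simp
  interpret pU: prob_space "distr M N U" by (rule prob_space_distr[OF U])
  interpret pV: prob_space "distr M N' V'" by (rule prob_space_distr[OF V])
  interpret pp: pair_sigma_finite "distr M N U" "distr M N' V'" ..
  have Phi2: "(\<lambda>p. Phi (fst p, v (snd p))) \<in> borel_measurable (N \<Otimes>\<^sub>M N')"
    by measurable
  have "(\<integral>\<^sup>+\<omega>. Phi (U \<omega>, v (V' \<omega>)) \<partial>M) = (\<integral>\<^sup>+p. Phi (fst p, v (snd p)) \<partial>distr M (N \<Otimes>\<^sub>M N') (\<lambda>x. (U x, V' x)))"
    by (subst nn_integral_distr) (auto intro!: measurable_Pair U V Phi2)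
  also have "\<dots> = (\<integral>\<^sup>+p. Phi (fst p, v (snd p)) \<partial>(distr M N U \<Otimes>\<^sub>M distr M N' V'))"
    by (simp add: eq)
  also have "\<dots> = (\<integral>\<^sup>+u. \<integral>\<^sup>+w. Phi (u, v w) \<partial>distr M N' V' \<partial>distr M N U)"
    by (subst pV.nn_integral_fst[symmetric]) (auto simp: Phi2 cong: measurable_cong_sets)
  also have "\<dots> = (\<integral>\<^sup>+u. \<integral>\<^sup>+x. g x * Phi (u, x) \<partial>lborel \<partial>distr M N U)"
  proof (rule nn_integral_cong)
    fix u assume "u \<in> space (distr M N U)"
    then have u: "u \<in> space N" by simp
    have m: "(\<lambda>x. Phi (u, x)) \<in> borel_measurable borel"
      using measurable_compose_Pair1[OF u Phi] by simp
    have "(\<integral>\<^sup>+w. Phi (u, v w) \<partial>distr M N' V') = (\<integral>\<^sup>+\<omega>. Phi (u, v (V' \<omega>)) \<partial>M)"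
      by (subst nn_integral_distr) (use m in auto)
    also have "\<dots> = (\<integral>\<^sup>+x. g x * Phi (u, x) \<partial>lborel)"
      by (rule distributed_nn_integral[OF dist, symmetric]) (use m in simp)
    finally show "(\<integral>\<^sup>+w. Phi (u, v w) \<partial>distr M N' V') = (\<integral>\<^sup>+x. g x * Phi (u, x) \<partial>lborel)" .
  qed
  also have "\<dots> = (\<integral>\<^sup>+\<omega>. (\<integral>\<^sup>+x. g x * Phi (U \<omega>, x) \<partial>lborel) \<partial>M)"
  proof -
    have "(\<lambda>p. g (snd p) * Phi p) \<in> borel_measurable (N \<Otimes>\<^sub>M lborel)"
      using Phi by (auto intro!: borel_measurable_times measurable_compose[OF measurable_snd g] simp: cong: measurable_cong_sets)
    then have "(\<lambda>u. \<integral>\<^sup>+v. g v * Phi (u, v) \<partial>lborel) \<in> borel_measurable N"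
      by (intro lborel.borel_measurable_nn_integral) (simp add: case_prod_beta')
    then show ?thesis by (subst nn_integral_distr[OF U]) simp_all
  qed
  finally show ?thesis .
qed

lemma conv_step:
  fixes g r \<phi> :: "real \<Rightarrow> ennreal" and h :: "'c \<Rightarrow> real" and v :: "'c \<Rightarrow> real"
  assumes ind: "indep_var N U N' V'" and v[measurable]: "v \<in> borel_measurable N'"
    and dist: "distributed M lborel (\<lambda>\<omega>. v (V' \<omega>)) g"
    and P[measurable]: "Measurable.pred N P" and h[measurable]: "h \<in> borel_measurable N"
    and r[measurable]: "r \<in> borel_measurable borel"
    and hyp: "\<And>\<phi>. \<phi> \<in> borel_measurable borel \<Longrightarrow>
       (\<integral>\<^sup>+\<omega>. (if P (U \<omega>) then \<phi> (h (U \<omega>)) else 0) \<partial>M) = (\<integral>\<^sup>+s. r s * \<phi> s \<partial>lborel)"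
    and phi[measurable]: "\<phi> \<in> borel_measurable borel"
  shows "(\<integral>\<^sup>+\<omega>. (if P (U \<omega>) then \<phi> (h (U \<omega>) + v (V' \<omega>)) else 0) \<partial>M)
       = (\<integral>\<^sup>+z. \<phi> z * (\<integral>\<^sup>+s. r s * g (z - s) \<partial>lborel) \<partial>lborel)"
proof -
  have g[measurable]: "g \<in> borel_measurable borel"
    using distributed_borel_measurable[OF dist] by simp
  define psi where "psi s = (\<integral>\<^sup>+v. g v * \<phi> (s + v) \<partial>lborel)" for s
  have psi[measurable]: "psi \<in> borel_measurable borel"
    unfolding psi_def by measurable
  have Phi: "(\<lambda>(w, v). if P w then \<phi> (h w + v) else 0) \<in> borel_measurable (N \<Otimes>\<^sub>M borel)"
    by measurable
  have "(\<integral>\<^sup>+\<omega>. (if P (U \<omega>) then \<phi> (h (U \<omega>) + v (V' \<omega>)) else 0) \<partial>M)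
      = (\<integral>\<^sup>+\<omega>. (\<integral>\<^sup>+v. g v * (if P (U \<omega>) then \<phi> (h (U \<omega>) + v) else 0) \<partial>lborel) \<partial>M)"
    using GL[OF ind v dist Phi] by simp
  also have "\<dots> = (\<integral>\<^sup>+\<omega>. (if P (U \<omega>) then psi (h (U \<omega>)) else 0) \<partial>M)"
    by (rule nn_integral_cong) (simp add: psi_def)
  also have "\<dots> = (\<integral>\<^sup>+s. r s * psi s \<partial>lborel)"
    by (rule hyp[OF psi])
  also have "\<dots> = (\<integral>\<^sup>+s. (\<integral>\<^sup>+z. r s * g (z - s) * \<phi> z \<partial>lborel) \<partial>lborel)"
  proof (rule nn_integral_cong)
    fix s
    have "psi s = (\<integral>\<^sup>+z. g (z - s) * \<phi> z \<partial>lborel)"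
      unfolding psi_def using nn_integral_real_affine[of "\<lambda>z. g (z - s) * \<phi> z" 1 s] by simp
    then show "r s * psi s = (\<integral>\<^sup>+z. r s * g (z - s) * \<phi> z \<partial>lborel)"
      by (simp add: nn_integral_cmult mult.assoc)
  qed
  also have "\<dots> = (\<integral>\<^sup>+z. (\<integral>\<^sup>+s. r s * g (z - s) * \<phi> z \<partial>lborel) \<partial>lborel)"
    by (rule lborel_pair.Fubini') measurable
  also have "\<dots> = (\<integral>\<^sup>+z. \<phi> z * (\<integral>\<^sup>+s. r s * g (z - s) \<partial>lborel) \<partial>lborel)"
    by (rule nn_integral_cong) (simp add: nn_integral_cmult[symmetric] mult_ac)
  finally show ?thesis .
qed

end

lemma conv_fdens:
  assumes m: "m \<ge> 1"
  shows "(\<integral>\<^sup>+s. ennreal (fdens m s) * ennreal (f1 (z - s)) \<partial>lborel) = ennreal (fdens (Suc m) z)"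
proof -
  define C where "C = exp (z - real m - 1) / fact (m - 1)"
  have C0: "C \<ge> 0" unfolding C_def by simp
  have pt: "ennreal (fdens m s) * ennreal (f1 (z - s)) = ennreal (indicator {z-1..real m} s * (C * (real m - s) ^ (m - 1)))" for s
  proof (cases "s \<le> real m \<and> z - s \<le> 1")
    case True
    have "exp (z - s - 1) / exp (real m - s) = exp (z - real m - 1)"
      by (simp add: exp_diff[symmetric])
    then have "fdens m s * f1 (z - s) = C * (real m - s) ^ (m - 1)"
      using True unfolding fdens_def f1_def C_def
      by (simp add: field_simps)
    then show ?thesis using True
      by (simp add: ennreal_mult''[symmetric] fdens_nonneg f1_nonneg indicator_def)
  next
    case False
    then show ?thesis by (auto simp: fdens_def f1_def indicator_def)
  qed
  show ?thesis
  proof (cases "z - 1 \<le> real m")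
    case True
    define F where "F s = - C * (real m - s) ^ m / real m" for s
    have der: "(F has_vector_derivative (C * (real m - s) ^ (m - 1))) (at s within {z-1..real m})" for s
    proof -
      have "(F has_real_derivative (- C / real m * (real m * (real m - s) ^ (m - 1) * (- 1)))) (at s within {z-1..real m})"
        unfolding F_def by (auto intro!: derivative_eq_intros simp: field_simps)
      moreover have "- C / real m * (real m * (real m - s) ^ (m - 1) * (- 1)) = C * (real m - s) ^ (m - 1)"
        using m by (simp add: field_simps)
      ultimately show ?thesis by (simp add: has_real_derivative_iff_has_vector_derivative)
    qed
    have hi: "((\<lambda>s. C * (real m - s) ^ (m - 1)) has_integral (F (real m) - F (z - 1))) {z-1..real m}"
      by (rule fundamental_theorem_of_calculus) (use True der in auto)
    have val: "F (real m) - F (z - 1) = fdens (Suc m) z"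
    proof -
      have "F (real m) - F (z - 1) = C * (real m + 1 - z) ^ m / real m"
        using m by (simp add: F_def field_simps power_0_left)
      also have "\<dots> = fdens (Suc m) z"
      proof -
        have fm: "fact m = real m * fact (m - 1)"
          using m by (metis fact_reduce of_nat_fact not_one_le_zero of_nat_eq_0_iff gr0I)
        have e: "exp (z - real m - 1) = 1 / exp (real m + 1 - z)"
          by (simp add: exp_diff exp_minus field_simps)
        have e2: "exp (z - (1 + real m)) * exp (1 + real m - z) = 1"
          by (simp add: exp_add[symmetric])
        show ?thesis using True m unfolding fdens_def C_def
          by (simp add: fm e field_simps e2)
      qed
      finally show ?thesis .
    qed
    have "(\<integral>\<^sup>+s. ennreal (fdens m s) * ennreal (f1 (z - s)) \<partial>lborel)
        = (\<integral>\<^sup>+s. ennreal (indicator {z-1..real m} s * (C * (real m - s) ^ (m - 1))) \<partial>lborel)"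
      by (simp add: pt)
    also have "\<dots> = ennreal (fdens (Suc m) z)"
      using nn_integral_has_integral_lebesgue[OF _ hi] C0 val by (simp)
    finally show ?thesis .
  next
    case False
    then have "ennreal (fdens m s) * ennreal (f1 (z - s)) = 0" for s
      by (auto simp: fdens_def f1_def)
    moreover have "fdens (Suc m) z = 0" using False by (simp add: fdens_def)
    ultimately show ?thesis by (simp del: mult_eq_0_iff)
  qed
qed

lemma distributedI_nn:
  fixes S :: "'a \<Rightarrow> real" and g :: "real \<Rightarrow> ennreal"
  assumes S[measurable]: "S \<in> borel_measurable M" and g[measurable]: "g \<in> borel_measurable borel"
    and eq: "\<And>A. A \<in> sets borel \<Longrightarrow> (\<integral>\<^sup>+\<omega>. indicator A (S \<omega>) \<partial>M) = (\<integral>\<^sup>+z. g z * indicator A z \<partial>lborel)"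
  shows "distributed M lborel S g"
  unfolding distributed_def
proof (intro conjI)
  show "distr M lborel S = density lborel g"
  proof (rule measure_eqI)
    fix A assume A: "A \<in> sets (distr M lborel S)"
    then have A': "A \<in> sets borel" by simp
    have "emeasure (distr M lborel S) A = emeasure M (S -` A \<inter> space M)"
      using A by (subst emeasure_distr) auto
    also have "\<dots> = (\<integral>\<^sup>+\<omega>. indicator (S -` A \<inter> space M) \<omega> \<partial>M)"
      using A' by (subst nn_integral_indicator) (auto intro!: measurable_sets[OF S])
    also have "\<dots> = (\<integral>\<^sup>+\<omega>. indicator A (S \<omega>) \<partial>M)"
      by (rule nn_integral_cong) (auto simp: indicator_def)
    also have "\<dots> = emeasure (density lborel g) A"
      using A' by (simp add: eq emeasure_density)
    finally show "emeasure (distr M lborel S) A = emeasure (density lborel g) A" .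
  qed simp
qed (use S g in auto)

locale setting = prob_space +
  fixes X :: "nat \<Rightarrow> 'a \<Rightarrow> real" and y :: real
  assumes indep: "indep_vars (\<lambda>_. borel) X {1..}"
    and distX: "\<And>i. i \<ge> 1 \<Longrightarrow> distributed M lborel (X i) (\<lambda>t. ennreal (if t \<le> 1 then exp (t - 1) else 0))"
    and ypos: "y > 0"
begin

lemma distX': "i \<ge> 1 \<Longrightarrow> distributed M lborel (X i) (\<lambda>t. ennreal (f1 t))"
  using distX by (simp add: f1_def)

lemma X_meas[measurable]: "i \<ge> 1 \<Longrightarrow> X i \<in> borel_measurable M"
  using distributed_measurable[OF distX'] by simp

lemma indepW: "A \<inter> B = {} \<Longrightarrow> A \<subseteq> {1..} \<Longrightarrow> B \<subseteq> {1..} \<Longrightarrow>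
  indep_var (PiM A (\<lambda>_. borel)) (\<lambda>\<omega>. restrict (\<lambda>i. X i \<omega>) A) (PiM B (\<lambda>_. borel)) (\<lambda>\<omega>. restrict (\<lambda>i. X i \<omega>) B)"
  by (rule indep_var_restrict[OF indep]) auto

lemma distS: "finite J \<Longrightarrow> J \<noteq> {} \<Longrightarrow> J \<subseteq> {1..} \<Longrightarrow>
  distributed M lborel (\<lambda>\<omega>. \<Sum>i\<in>J. X i \<omega>) (\<lambda>z. ennreal (fdens (card J) z))"
proof (induction J rule: finite_ne_induct)
  case (singleton j)
  then show ?case using distX'[of j] by (simp add: fdens_one)
next
  case (insert j J)
  have J1: "card J \<ge> 1" using insert by (simp add: Suc_leI card_gt_0_iff)
  have ind: "indep_var (PiM J (\<lambda>_. borel)) (\<lambda>\<omega>. restrict (\<lambda>i. X i \<omega>) J) (PiM {j} (\<lambda>_. borel)) (\<lambda>\<omega>. restrict (\<lambda>i. X i \<omega>) {j})"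
    using insert by (intro indepW) auto
  have dj: "distributed M lborel (\<lambda>\<omega>. (\<lambda>w. w j) (restrict (\<lambda>i. X i \<omega>) {j})) (\<lambda>t. ennreal (f1 t))"
    using distX'[of j] insert by simp
  have IH: "distributed M lborel (\<lambda>\<omega>. \<Sum>i\<in>J. X i \<omega>) (\<lambda>z. ennreal (fdens (card J) z))"
    using insert by auto
  have meas: "(\<lambda>\<omega>. \<Sum>i\<in>insert j J. X i \<omega>) \<in> borel_measurable M"
    using insert by (intro borel_measurable_sum X_meas) auto
  show ?case
  proof (rule distributedI_nn[OF meas])
    fix A :: "real set" assume A[measurable]: "A \<in> sets borel"
    have hyp: "(\<integral>\<^sup>+\<omega>. (if True then \<phi> ((\<lambda>w. \<Sum>i\<in>J. w i) (restrict (\<lambda>i. X i \<omega>) J)) else 0) \<partial>M)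
        = (\<integral>\<^sup>+s. ennreal (fdens (card J) s) * \<phi> s \<partial>lborel)" if [measurable]: "\<phi> \<in> borel_measurable borel" for \<phi>
      using distributed_nn_integral[OF IH, of \<phi>] by simp
    have "(\<integral>\<^sup>+\<omega>. indicator A (\<Sum>i\<in>insert j J. X i \<omega>) \<partial>M)
       = (\<integral>\<^sup>+\<omega>. (if True then indicator A ((\<lambda>w. \<Sum>i\<in>J. w i) (restrict (\<lambda>i. X i \<omega>) J) + (\<lambda>w. w j) (restrict (\<lambda>i. X i \<omega>) {j})) else 0) \<partial>M)"
      using insert by (simp add: add.commute)
    also have "\<dots> = (\<integral>\<^sup>+z. indicator A z * (\<integral>\<^sup>+s. ennreal (fdens (card J) s) * ennreal (f1 (z - s)) \<partial>lborel) \<partial>lborel)"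
      by (rule conv_step[where v="\<lambda>w. w j" and g="\<lambda>t. ennreal (f1 t)" and P="\<lambda>_. True"
            and h="\<lambda>w. \<Sum>i\<in>J. w i" and r="\<lambda>s. ennreal (fdens (card J) s)", OF ind _ dj _ _ _ hyp]) auto
    also have "\<dots> = (\<integral>\<^sup>+z. ennreal (fdens (card (insert j J)) z) * indicator A z \<partial>lborel)"
      using insert J1 conv_fdens[OF J1] by (simp add: mult.commute)
    finally show "(\<integral>\<^sup>+\<omega>. indicator A (\<Sum>i\<in>insert j J. X i \<omega>) \<partial>M) = (\<integral>\<^sup>+z. ennreal (fdens (card (insert j J)) z) * indicator A z \<partial>lborel)" .
  qed simp
qed

end

lemma conv_real:
  fixes u v :: "real \<Rightarrow> real"
  assumes u: "integrable lborel u" and u0: "\<And>s. 0 \<le> u s"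
    and v[measurable]: "v \<in> borel_measurable borel" and v0: "\<And>t. 0 \<le> v t" and v1: "\<And>t. v t \<le> 1"
  shows "integrable lborel (\<lambda>s. u s * v (z - s))"
    and "(\<integral>\<^sup>+s. ennreal (u s) * ennreal (v (z - s)) \<partial>lborel) = ennreal (LINT s|lborel. u s * v (z - s))"
proof -
  have um[measurable]: "u \<in> borel_measurable borel" using borel_measurable_integrable[OF u] by simp
  show i: "integrable lborel (\<lambda>s. u s * v (z - s))"
  proof (rule Bochner_Integration.integrable_bound[OF u])
    show "(\<lambda>s. u s * v (z - s)) \<in> borel_measurable lborel" by measurable
    show "AE x in lborel. norm (u x * v (z - x)) \<le> norm (u x)"
      using u0 v0 v1 by (auto simp: abs_mult intro!: mult_left_le)
  qed
  have "(\<integral>\<^sup>+s. ennreal (u s) * ennreal (v (z - s)) \<partial>lborel) = (\<integral>\<^sup>+s. ennreal (u s * v (z - s)) \<partial>lborel)"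
    using u0 v0 by (intro nn_integral_cong) (simp add: ennreal_mult)
  also have "\<dots> = ennreal (LINT s|lborel. u s * v (z - s))"
    by (rule nn_integral_eq_integral[OF i]) (use u0 v0 in auto)
  finally show "(\<integral>\<^sup>+s. ennreal (u s) * ennreal (v (z - s)) \<partial>lborel) = ennreal (LINT s|lborel. u s * v (z - s))" .
qed

lemma cont_conv:
  fixes u v :: "real \<Rightarrow> real"
  assumes u: "integrable lborel u"
    and v[measurable]: "v \<in> borel_measurable borel" and v1: "\<And>t. \<bar>v t\<bar> \<le> 1"
    and vc: "\<And>w. w \<noteq> p \<Longrightarrow> isCont v w"
  shows "isCont (\<lambda>z. LINT s|lborel. u s * v (z - s)) z0"
proof (rule continuous_at_sequentiallyI)
  fix x :: "nat \<Rightarrow> real" assume x: "x \<longlonglongrightarrow> z0"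
  have um[measurable]: "u \<in> borel_measurable borel" using borel_measurable_integrable[OF u] by simp
  show "(\<lambda>n. LINT s|lborel. u s * v (x n - s)) \<longlonglongrightarrow> (LINT s|lborel. u s * v (z0 - s))"
  proof (rule integral_dominated_convergence[where w="\<lambda>s. \<bar>u s\<bar>"])
    show "(\<lambda>s. u s * v (z0 - s)) \<in> borel_measurable lborel" by measurable
    show "(\<lambda>s. u s * v (x i - s)) \<in> borel_measurable lborel" for i by measurable
    show "integrable lborel (\<lambda>s. \<bar>u s\<bar>)" using u by simp
    show "AE s in lborel. norm (u s * v (x i - s)) \<le> \<bar>u s\<bar>" for i
      using v1 by (auto simp: abs_mult intro!: mult_left_le)
    show "AE s in lborel. (\<lambda>i. u s * v (x i - s)) \<longlonglongrightarrow> u s * v (z0 - s)"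
      using AE_lborel_singleton[of "z0 - p"]
    proof eventually_elim
      case (elim s)
      then have "z0 - s \<noteq> p" by auto
      then have "isCont v (z0 - s)" by (rule vc)
      moreover have "(\<lambda>i. x i - s) \<longlonglongrightarrow> z0 - s" using x by (intro tendsto_intros)
      ultimately have "(\<lambda>i. v (x i - s)) \<longlonglongrightarrow> v (z0 - s)"
        by (rule isCont_tendsto_compose)
      then show ?case by (intro tendsto_intros)
    qed
  qed
qed

lemma ftc_half:
  fixes h :: "real \<Rightarrow> real"
  assumes h: "integrable lborel h" and hc: "isCont h x"
  shows "((\<lambda>t. LINT z|lborel. indicator {..t} z * h z) has_field_derivative h x) (at x)"
proof -
  define a where "a = x - 1"
  define b where "b = x + 1"
  define C where "C = (LINT z|lborel. indicator {..<a} z * h z)"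
  have hm[measurable]: "h \<in> borel_measurable borel" using borel_measurable_integrable[OF h] by simp
  have si: "set_integrable lborel {a..t} h" for t
    unfolding set_integrable_def by (rule integrable_mult_indicator) (use h in auto)
  have ih: "integrable lborel (\<lambda>z. indicator S z * h z)" if "S \<in> sets borel" for S
    using integrable_mult_indicator[of S lborel h] h that by simp
  have hi: "h integrable_on {a..b}" using set_borel_integral_eq_integral(1)[OF si] .
  have eq: "(LINT z|lborel. indicator {..t} z * h z) = C + integral {a..t} h" if "t \<in> {a<..}" for t
  proof -
    have "(\<lambda>z. indicator {..t} z * h z) = (\<lambda>z. indicator {..<a} z * h z + indicator {a..t} z * h z)"
      using that by (auto simp: indicator_def fun_eq_iff)
    then have "(LINT z|lborel. indicator {..t} z * h z) = C + (LINT z|lborel. indicator {a..t} z * h z)"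
      unfolding C_def
      by (simp, subst Bochner_Integration.integral_add)
         (auto intro!: ih)
    also have "(LINT z|lborel. indicator {a..t} z * h z) = integral {a..t} h"
      using set_borel_integral_eq_integral(2)[OF si[of t]] by (simp add: set_lebesgue_integral_def)
    finally show ?thesis .
  qed
  have "((\<lambda>u. integral {a..u} h) has_vector_derivative h x) (at x within ({a..b} - {}))"
    by (rule integral_has_vector_derivative_continuous_at[OF hi])
       (auto simp: a_def b_def intro: continuous_at_imp_continuous_within hc)
  then have "((\<lambda>u. integral {a..u} h) has_field_derivative h x) (at x)"
    by (simp add: at_within_Icc_at a_def b_def has_real_derivative_iff_has_vector_derivative)
  then have "((\<lambda>u. C + integral {a..u} h) has_field_derivative h x) (at x)"
    by (auto intro!: derivative_eq_intros)
  then show ?thesis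
    by (rule has_field_derivative_transform_within_open[where S="{a<..}"]) (auto simp: a_def eq)
qed

fun rr :: "real \<Rightarrow> nat \<Rightarrow> real \<Rightarrow> real" where
  "rr y 0 t = 0"
| "rr y (Suc 0) t = f1 t"
| "rr y (Suc (Suc m)) t = (LINT s|lborel. (rr y (Suc m) s * indicator {..<y} s) * f1 (t - s))"

lemma psum_Suc: "psum X (Suc m) \<omega> = psum X m \<omega> + X (Suc m) \<omega>"
  by (simp add: psum_def)

lemma psum_0: "psum X 0 \<omega> = 0"
  by (simp add: psum_def)

lemma psum_restrict: "j \<le> m \<Longrightarrow> (\<Sum>i\<in>{1..j}. restrict (\<lambda>i. X i \<omega>) {1..m} i) = psum X j \<omega>"
  by (simp add: psum_def)

lemma meas_sum_PiM: "J \<subseteq> K \<Longrightarrow> (\<lambda>w. \<Sum>i\<in>J. w i) \<in> borel_measurable (PiM K (\<lambda>_. borel::real measure))"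
  by (intro borel_measurable_sum) (auto intro!: measurable_component_singleton)

lemma pred_P: "Measurable.pred (PiM {1..m} (\<lambda>_. borel::real measure)) (\<lambda>w. \<forall>j<Suc m. (\<Sum>i\<in>{1..j}. w i) < y)"
proof -
  have "Measurable.pred (PiM {1..m} (\<lambda>_. borel::real measure)) (\<lambda>w. \<forall>j\<in>{..m}. (\<Sum>i\<in>{1..j}. w i) < y)"
    by (intro pred_intros_finite borel_measurable_pred_less meas_sum_PiM measurable_const) auto
  moreover have "(\<lambda>w. \<forall>j\<in>{..m}. (\<Sum>i\<in>{1..j}. w i) < y) = (\<lambda>w::nat\<Rightarrow>real. \<forall>j<Suc m. (\<Sum>i\<in>{1..j}. w i) < y)"
    by (auto simp: less_Suc_eq_le)
  ultimately show ?thesis by simp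
qed

context setting
begin

lemma Dm:
  assumes "m \<ge> 1"
  shows "rr y m \<in> borel_measurable borel \<and> (\<forall>s. 0 \<le> rr y m s) \<and>
    (\<forall>\<phi> \<in> borel_measurable borel. (\<integral>\<^sup>+\<omega>. (if (\<forall>j<m. psum X j \<omega> < y) then \<phi> (psum X m \<omega>) else 0) \<partial>M)
       = (\<integral>\<^sup>+s. ennreal (rr y m s) * \<phi> s \<partial>lborel))"
  using assms
proof (induction m rule: nat_induct_at_least)
  case base
  have "(\<integral>\<^sup>+\<omega>. (if (\<forall>j<1. psum X j \<omega> < y) then \<phi> (psum X 1 \<omega>) else 0) \<partial>M)
       = (\<integral>\<^sup>+s. ennreal (rr y 1 s) * \<phi> s \<partial>lborel)" if "\<phi> \<in> borel_measurable borel" for \<phi>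
    using distributed_nn_integral[OF distX'[OF order_refl], of \<phi>] that ypos by (simp add: psum_def)
  then show ?case by (auto simp: f1_nonneg)
next
  case (Suc m)
  then obtain m' where m': "m = Suc m'" by (cases m) auto
  have rm[measurable]: "rr y m \<in> borel_measurable borel" and r0: "\<And>s. 0 \<le> rr y m s"
    and hypm: "\<And>\<phi>. \<phi> \<in> borel_measurable borel \<Longrightarrow> (\<integral>\<^sup>+\<omega>. (if (\<forall>j<m. psum X j \<omega> < y) then \<phi> (psum X m \<omega>) else 0) \<partial>M)
       = (\<integral>\<^sup>+s. ennreal (rr y m s) * \<phi> s \<partial>lborel)"
    using Suc.IH by auto
  define u where "u s = rr y m s * indicator {..<y} s" for s
  have um[measurable]: "u \<in> borel_measurable borel" unfolding u_def by measurable
  have u0: "0 \<le> u s" for s using r0 by (simp add: u_def)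
  have "(\<integral>\<^sup>+s. ennreal (u s) \<partial>lborel) \<le> (\<integral>\<^sup>+s. ennreal (rr y m s) * 1 \<partial>lborel)"
    by (intro nn_integral_mono) (auto simp: u_def indicator_def)
  also have "\<dots> = (\<integral>\<^sup>+\<omega>. (if (\<forall>j<m. psum X j \<omega> < y) then 1 else 0) \<partial>M)"
    using hypm[of "\<lambda>_. 1"] by simp
  also have "\<dots> \<le> (\<integral>\<^sup>+\<omega>. 1 \<partial>M)"
    by (intro nn_integral_mono) auto
  also have "\<dots> = 1" by (simp add: emeasure_space_1)
  finally have uint: "integrable lborel u"
    by (intro integrableI_nonneg) (auto simp: u0 intro: le_less_trans)
  have rr_eq: "rr y (Suc m) t = (LINT s|lborel. u s * f1 (t - s))" for t
    by (simp add: m' u_def)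
  have cont: "isCont (rr y (Suc m)) t" for t
    unfolding rr_eq[abs_def]
    by (rule cont_conv[OF uint f1_meas _ f1_isCont]) (use f1_nonneg f1_le1 in auto)
  have meas: "rr y (Suc m) \<in> borel_measurable borel"
    by (intro borel_measurable_continuous_onI continuous_at_imp_continuous_on) (use cont in auto)
  have nonneg: "0 \<le> rr y (Suc m) s" for s
    unfolding rr_eq by (rule Bochner_Integration.integral_nonneg) (use u0 f1_nonneg in auto)
  have main: "(\<integral>\<^sup>+\<omega>. (if (\<forall>j<Suc m. psum X j \<omega> < y) then \<phi> (psum X (Suc m) \<omega>) else 0) \<partial>M)
       = (\<integral>\<^sup>+s. ennreal (rr y (Suc m) s) * \<phi> s \<partial>lborel)" if phim[measurable]: "\<phi> \<in> borel_measurable borel" for \<phi>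
  proof -
    have ind: "indep_var (PiM {1..m} (\<lambda>_. borel)) (\<lambda>\<omega>. restrict (\<lambda>i. X i \<omega>) {1..m})
        (PiM {Suc m} (\<lambda>_. borel)) (\<lambda>\<omega>. restrict (\<lambda>i. X i \<omega>) {Suc m})"
      by (intro indepW) auto
    have dj: "distributed M lborel (\<lambda>\<omega>. (\<lambda>w. w (Suc m)) (restrict (\<lambda>i. X i \<omega>) {Suc m})) (\<lambda>t. ennreal (f1 t))"
      using distX'[of "Suc m"] by simp
    have Peq: "(\<forall>j<Suc m. (\<Sum>i\<in>{1..j}. restrict (\<lambda>i. X i \<omega>) {1..m} i) < y) \<longleftrightarrow>
        (\<forall>j<m. psum X j \<omega> < y) \<and> psum X m \<omega> < y" for \<omega>
      by (auto simp: psum_def less_Suc_eq)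
    have heq: "(\<Sum>i\<in>{1..m}. restrict (\<lambda>i. X i \<omega>) {1..m} i) = psum X m \<omega>" for \<omega>
      by (simp add: psum_def)
    have hyp: "(\<integral>\<^sup>+\<omega>. (if (\<lambda>w. \<forall>j<Suc m. (\<Sum>i\<in>{1..j}. w i) < y) (restrict (\<lambda>i. X i \<omega>) {1..m})
          then \<psi> ((\<lambda>w. \<Sum>i\<in>{1..m}. w i) (restrict (\<lambda>i. X i \<omega>) {1..m})) else 0) \<partial>M)
        = (\<integral>\<^sup>+s. ennreal (u s) * \<psi> s \<partial>lborel)" if psim[measurable]: "\<psi> \<in> borel_measurable borel" for \<psi>
    proof -
      have "(\<integral>\<^sup>+\<omega>. (if (\<lambda>w. \<forall>j<Suc m. (\<Sum>i\<in>{1..j}. w i) < y) (restrict (\<lambda>i. X i \<omega>) {1..m})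
          then \<psi> ((\<lambda>w. \<Sum>i\<in>{1..m}. w i) (restrict (\<lambda>i. X i \<omega>) {1..m})) else 0) \<partial>M)
        = (\<integral>\<^sup>+\<omega>. (if (\<forall>j<m. psum X j \<omega> < y) then (\<lambda>s. if s < y then \<psi> s else 0) (psum X m \<omega>) else 0) \<partial>M)"
        by (rule nn_integral_cong) (simp only: Peq heq, auto)
      also have "\<dots> = (\<integral>\<^sup>+s. ennreal (rr y m s) * (if s < y then \<psi> s else 0) \<partial>lborel)"
        by (rule hypm) measurable
      also have "\<dots> = (\<integral>\<^sup>+s. ennreal (u s) * \<psi> s \<partial>lborel)"
        by (rule nn_integral_cong) (auto simp: u_def indicator_def)
      finally show ?thesis .
    qed
    have "(\<integral>\<^sup>+\<omega>. (if (\<forall>j<Suc m. psum X j \<omega> < y) then \<phi> (psum X (Suc m) \<omega>) else 0) \<partial>M)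
      = (\<integral>\<^sup>+\<omega>. (if (\<lambda>w. \<forall>j<Suc m. (\<Sum>i\<in>{1..j}. w i) < y) (restrict (\<lambda>i. X i \<omega>) {1..m})
          then \<phi> ((\<lambda>w. \<Sum>i\<in>{1..m}. w i) (restrict (\<lambda>i. X i \<omega>) {1..m}) + (\<lambda>w. w (Suc m)) (restrict (\<lambda>i. X i \<omega>) {Suc m})) else 0) \<partial>M)"
      by (rule nn_integral_cong) (simp only: Peq heq psum_Suc, auto simp: less_Suc_eq)
    also have "\<dots> = (\<integral>\<^sup>+z. \<phi> z * (\<integral>\<^sup>+s. ennreal (u s) * ennreal (f1 (z - s)) \<partial>lborel) \<partial>lborel)"
      by (rule conv_step[where v="\<lambda>w. w (Suc m)" and g="\<lambda>t. ennreal (f1 t)"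
            and P="\<lambda>w. \<forall>j<Suc m. (\<Sum>i\<in>{1..j}. w i) < y"
            and h="\<lambda>w. \<Sum>i\<in>{1..m}. w i" and r="\<lambda>s. ennreal (u s)", OF ind _ dj pred_P meas_sum_PiM _ hyp])
         auto
    also have "\<dots> = (\<integral>\<^sup>+z. ennreal (rr y (Suc m) z) * \<phi> z \<partial>lborel)"
      by (rule nn_integral_cong)
         (simp add: conv_real(2)[OF uint u0 f1_meas f1_nonneg f1_le1] rr_eq mult.commute)
    finally show ?thesis .
  qed
  show ?case using meas nonneg main by auto
qed

end

lemma fdens_cont2: assumes "m \<ge> 2" shows "isCont (fdens m) t"
proof -
  have eq: "fdens m = (\<lambda>t. (max (real m - t) 0) ^ (m - 1) / (exp (real m - t) * fact (m - 1)))"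
    using assms by (auto simp: fdens_def fun_eq_iff max_def)
  show ?thesis unfolding eq by (intro continuous_intros) auto
qed

context setting
begin

lemma psum_meas[measurable]: "psum X j \<in> borel_measurable M"
  unfolding psum_def by (intro borel_measurable_sum X_meas) auto

lemma rr_meas: "m \<ge> 1 \<Longrightarrow> rr y m \<in> borel_measurable borel"
  using Dm by blast

lemma rr_nonneg: "m \<ge> 1 \<Longrightarrow> 0 \<le> rr y m s"
  using Dm by blast

lemma rr_hyp: "m \<ge> 1 \<Longrightarrow> \<phi> \<in> borel_measurable borel \<Longrightarrow>
  (\<integral>\<^sup>+\<omega>. (if (\<forall>j<m. psum X j \<omega> < y) then \<phi> (psum X m \<omega>) else 0) \<partial>M)
       = (\<integral>\<^sup>+s. ennreal (rr y m s) * \<phi> s \<partial>lborel)"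
  using Dm by blast

lemma rr_int: assumes m: "m \<ge> 1" shows "integrable lborel (rr y m)"
proof -
  have [measurable]: "rr y m \<in> borel_measurable borel" using rr_meas[OF m] .
  have "(\<integral>\<^sup>+s. ennreal (rr y m s) \<partial>lborel) = (\<integral>\<^sup>+\<omega>. (if (\<forall>j<m. psum X j \<omega> < y) then 1 else 0) \<partial>M)"
    using rr_hyp[OF m, of "\<lambda>_. 1"] by simp
  also have "\<dots> \<le> (\<integral>\<^sup>+\<omega>. 1 \<partial>M)"
    by (intro nn_integral_mono) auto
  also have "\<dots> = 1" by (simp add: emeasure_space_1)
  finally show ?thesis
    by (intro integrableI_nonneg) (auto simp: rr_nonneg[OF m] intro: le_less_trans)
qed

lemma rr_cont: assumes "m \<ge> 2" shows "isCont (rr y m) t"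
proof -
  obtain m' where m': "m = Suc (Suc m')" using assms by (metis add_2_eq_Suc le_Suc_ex)
  have ui: "integrable lborel (\<lambda>s. rr y (Suc m') s * indicator {..<y} s)"
    using integrable_mult_indicator[of "{..<y}" lborel "rr y (Suc m')"] rr_int[of "Suc m'"]
    by (simp add: mult.commute)
  have "isCont (\<lambda>t. LINT s|lborel. (rr y (Suc m') s * indicator {..<y} s) * f1 (t - s)) t"
    by (rule cont_conv[OF ui f1_meas _ f1_isCont]) (use f1_nonneg f1_le1 in auto)
  moreover have "rr y (Suc (Suc m')) = (\<lambda>t. LINT s|lborel. (rr y (Suc m') s * indicator {..<y} s) * f1 (t - s))"
    by (rule ext) simp
  ultimately show ?thesis using m' by simp
qed

lemma rr_zero: assumes "m \<ge> 2" "t \<ge> y + 1" shows "rr y m t = 0"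
proof -
  obtain m' where m': "m = Suc (Suc m')" using assms by (metis add_2_eq_Suc le_Suc_ex)
  have "(\<lambda>s. (rr y (Suc m') s * indicator {..<y} s) * f1 (t - s)) = (\<lambda>s. 0)"
    using assms by (auto simp: fun_eq_iff indicator_def f1_def)
  then show ?thesis using m' by simp
qed

lemma rr1_zero: "t > 1 \<Longrightarrow> rr y 1 t = 0"
  by (simp add: f1_def)

lemma G_eq: assumes m: "m \<ge> 1"
  shows "measure M {\<omega> \<in> space M. (\<forall>j<m. psum X j \<omega> < y) \<and> psum X m \<omega> \<le> t}
       = (LINT z|lborel. indicator {..t} z * rr y m z)"
proof -
  have [measurable]: "rr y m \<in> borel_measurable borel" using rr_meas[OF m] .
  have sets: "{\<omega> \<in> space M. (\<forall>j<m. psum X j \<omega> < y) \<and> psum X m \<omega> \<le> t} \<in> sets M"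
    by measurable
  have "emeasure M {\<omega> \<in> space M. (\<forall>j<m. psum X j \<omega> < y) \<and> psum X m \<omega> \<le> t}
      = (\<integral>\<^sup>+\<omega>. indicator {\<omega> \<in> space M. (\<forall>j<m. psum X j \<omega> < y) \<and> psum X m \<omega> \<le> t} \<omega> \<partial>M)"
    using sets by simp
  also have "\<dots> = (\<integral>\<^sup>+\<omega>. (if (\<forall>j<m. psum X j \<omega> < y) then indicator {..t} (psum X m \<omega>) else 0) \<partial>M)"
    by (rule nn_integral_cong) (auto simp: indicator_def)
  also have "\<dots> = (\<integral>\<^sup>+z. ennreal (rr y m z) * indicator {..t} z \<partial>lborel)"
    by (rule rr_hyp[OF m]) measurable
  also have "\<dots> = (\<integral>\<^sup>+z. ennreal (indicator {..t} z * rr y m z) \<partial>lborel)"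
    by (rule nn_integral_cong) (auto simp: indicator_def)
  also have "\<dots> = ennreal (LINT z|lborel. indicator {..t} z * rr y m z)"
    by (rule nn_integral_eq_integral)
       (use integrable_mult_indicator[of "{..t}" lborel "rr y m"] rr_int[OF m] rr_nonneg[OF m] in auto)
  finally show ?thesis
    by (simp add: measure_def Bochner_Integration.integral_nonneg rr_nonneg[OF m])
qed

lemma Rdens_eq: assumes m: "m \<ge> 1" and c: "isCont (rr y m) t"
  shows "Rdens M X m t y = rr y m t"
proof -
  have "((\<lambda>t. LINT z|lborel. indicator {..t} z * rr y m z) has_field_derivative rr y m t) (at t)"
    by (rule ftc_half[OF rr_int[OF m] c])
  then show ?thesis
    unfolding Rdens_def G_eq[OF m] by (rule DERIV_imp_deriv)
qed

end

context setting
begin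

lemma decomp_pt:
  fixes \<phi> :: "real \<Rightarrow> ennreal"
  shows "\<phi> (psum X n \<omega>) = (if (\<forall>j<n. psum X j \<omega> < y) then \<phi> (psum X n \<omega>) else 0)
     + (\<Sum>k\<in>{1..<n}. if (\<forall>j<k. psum X j \<omega> < y) \<and> y \<le> psum X k \<omega> then \<phi> (psum X n \<omega>) else 0)"
proof (cases "\<forall>j<n. psum X j \<omega> < y")
  case True
  then have "(\<Sum>k\<in>{1..<n}. if (\<forall>j<k. psum X j \<omega> < y) \<and> y \<le> psum X k \<omega> then \<phi> (psum X n \<omega>) else 0) = 0"
    by (intro sum.neutral) (auto simp: not_le)
  then show ?thesis using True by simp
next
  case False
  then have ex: "\<exists>j. j < n \<and> y \<le> psum X j \<omega>" by (auto simp: not_less)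
  define k0 where "k0 = (LEAST j. j < n \<and> y \<le> psum X j \<omega>)"
  have k0: "k0 < n \<and> y \<le> psum X k0 \<omega>" unfolding k0_def by (rule LeastI_ex[OF ex])
  have k0min: "j < k0 \<Longrightarrow> psum X j \<omega> < y" for j
    using not_less_Least[of j "\<lambda>j. j < n \<and> y \<le> psum X j \<omega>"] k0 unfolding k0_def[symmetric]
    by auto
  have k01: "k0 \<ge> 1" using k0 ypos by (cases k0) (auto simp: psum_0)
  have cond: "((\<forall>j<k. psum X j \<omega> < y) \<and> y \<le> psum X k \<omega>) \<longleftrightarrow> k0 = k" if "k < n" for k
  proof
    assume a: "(\<forall>j<k. psum X j \<omega> < y) \<and> y \<le> psum X k \<omega>"
    show "k0 = k"
    proof (rule ccontr)
      assume "k0 \<noteq> k"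
      then consider "k0 < k" | "k < k0" by linarith
      then show False
      proof cases
        case 1 then show False using a k0 by auto
      next
        case 2 then show False using a k0min[of k] by auto
      qed
    qed
  next
    assume "k0 = k" then show "(\<forall>j<k. psum X j \<omega> < y) \<and> y \<le> psum X k \<omega>" using k0 k0min by auto
  qed
  have "(\<Sum>k\<in>{1..<n}. if (\<forall>j<k. psum X j \<omega> < y) \<and> y \<le> psum X k \<omega> then \<phi> (psum X n \<omega>) else 0)
      = (\<Sum>k\<in>{1..<n}. if k0 = k then \<phi> (psum X n \<omega>) else 0)"
    by (intro sum.cong refl) (simp add: cond)
  also have "\<dots> = \<phi> (psum X n \<omega>)" using k0 k01 by simp
  finally show ?thesis by (subst if_not_P[OF False]) simp
qed

definition ck :: "nat \<Rightarrow> nat \<Rightarrow> real \<Rightarrow> real" where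
  "ck n k z = (LINT s|lborel. (rr y k s * indicator {y..} s) * fdens (n - k) (z - s))"

lemma uk_int: "k \<ge> 1 \<Longrightarrow> integrable lborel (\<lambda>s. rr y k s * indicator {y..} s)"
  using integrable_mult_indicator[of "{y..}" lborel "rr y k"] rr_int[of k]
  by (simp add: mult.commute)

lemma uk_nonneg: "k \<ge> 1 \<Longrightarrow> 0 \<le> rr y k s * indicator {y..} s"
  using rr_nonneg[of k s] by (simp add: indicator_def)

lemma ck_cont: "k \<ge> 1 \<Longrightarrow> isCont (ck n k) z"
  unfolding ck_def[abs_def]
  by (rule cont_conv[OF uk_int fdens_meas _ fdens_isCont]) (use fdens_nonneg fdens_le1 in auto)

lemma ck_meas: "k \<ge> 1 \<Longrightarrow> ck n k \<in> borel_measurable borel"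
  by (intro borel_measurable_continuous_onI continuous_at_imp_continuous_on) (use ck_cont in auto)

lemma ck_nonneg: "k \<ge> 1 \<Longrightarrow> 0 \<le> ck n k z"
  unfolding ck_def by (rule Bochner_Integration.integral_nonneg) (use uk_nonneg fdens_nonneg in auto)

lemma pred_Q: fixes k :: nat shows "Measurable.pred (PiM {1..k} (\<lambda>_. borel::real measure))
    (\<lambda>w. (\<forall>j<k. (\<Sum>i\<in>{1..j}. w i) < y) \<and> y \<le> (\<Sum>i\<in>{1..k}. w i))"
proof -
  have p1: "Measurable.pred (PiM {1..k} (\<lambda>_. borel::real measure)) (\<lambda>w. \<forall>j\<in>{..<k}. (\<Sum>i\<in>{1..j}. w i) < y)"
    by (rule pred_intros_finite) (auto intro!: borel_measurable_pred_less meas_sum_PiM)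
  note [measurable] = p1 meas_sum_PiM[OF order_refl, of "{1..k}"]
  have "Measurable.pred (PiM {1..k} (\<lambda>_. borel::real measure))
    (\<lambda>w. (\<forall>j\<in>{..<k}. (\<Sum>i\<in>{1..j}. w i) < y) \<and> y \<le> (\<Sum>i\<in>{1..k}. w i))"
    by measurable
  then show ?thesis by (simp add: lessThan_iff)
qed

lemma term_k:
  assumes k: "1 \<le> k" "k < n" and phim[measurable]: "\<phi> \<in> borel_measurable borel"
  shows "(\<integral>\<^sup>+\<omega>. (if (\<forall>j<k. psum X j \<omega> < y) \<and> y \<le> psum X k \<omega> then \<phi> (psum X n \<omega>) else 0) \<partial>M)
     = (\<integral>\<^sup>+z. ennreal (ck n k z) * \<phi> z \<partial>lborel)"
proof -
  have ind: "indep_var (PiM {1..k} (\<lambda>_. borel)) (\<lambda>\<omega>. restrict (\<lambda>i. X i \<omega>) {1..k})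
      (PiM {Suc k..n} (\<lambda>_. borel)) (\<lambda>\<omega>. restrict (\<lambda>i. X i \<omega>) {Suc k..n})"
    by (intro indepW) auto
  have d0: "distributed M lborel (\<lambda>\<omega>. \<Sum>i\<in>{Suc k..n}. X i \<omega>) (\<lambda>z. ennreal (fdens (card {Suc k..n}) z))"
    using k by (intro distS) auto
  have dj: "distributed M lborel (\<lambda>\<omega>. (\<lambda>w. \<Sum>i\<in>{Suc k..n}. w i) (restrict (\<lambda>i. X i \<omega>) {Suc k..n}))
      (\<lambda>t. ennreal (fdens (n - k) t))"
    using d0 by simp
  have Peq: "((\<lambda>w. (\<forall>j<k. (\<Sum>i\<in>{1..j}. w i) < y) \<and> y \<le> (\<Sum>i\<in>{1..k}. w i)) (restrict (\<lambda>i. X i \<omega>) {1..k}))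
      \<longleftrightarrow> (\<forall>j<k. psum X j \<omega> < y) \<and> y \<le> psum X k \<omega>" for \<omega>
    by (auto simp: psum_def)
  have heq: "(\<lambda>w. \<Sum>i\<in>{1..k}. w i) (restrict (\<lambda>i. X i \<omega>) {1..k}) = psum X k \<omega>" for \<omega>
    by (simp add: psum_def)
  have Peq2: "(\<forall>j<k. (\<Sum>i\<in>{1..j}. restrict (\<lambda>i. X i \<omega>) {1..k} i) < y) \<longleftrightarrow> (\<forall>j<k. psum X j \<omega> < y)" for \<omega>
    by (auto simp: psum_def)
  have veq: "(\<lambda>w. \<Sum>i\<in>{Suc k..n}. w i) (restrict (\<lambda>i. X i \<omega>) {Suc k..n}) = (\<Sum>i\<in>{Suc k..n}. X i \<omega>)" for \<omega>
    by simp
  have split: "psum X n \<omega> = psum X k \<omega> + (\<Sum>i\<in>{Suc k..n}. X i \<omega>)" for \<omega>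
  proof -
    have "n = k + (n - k)" using k by simp
    then have "(\<Sum>i\<in>{1..n}. X i \<omega>) = (\<Sum>i\<in>{1..k + (n - k)}. X i \<omega>)" by simp
    also have "\<dots> = (\<Sum>i\<in>{1..k}. X i \<omega>) + (\<Sum>i\<in>{k + 1..k + (n - k)}. X i \<omega>)"
      by (rule sum.ub_add_nat) simp
    finally show ?thesis using k by (simp add: psum_def)
  qed
  have hyp: "(\<integral>\<^sup>+\<omega>. (if (\<lambda>w. (\<forall>j<k. (\<Sum>i\<in>{1..j}. w i) < y) \<and> y \<le> (\<Sum>i\<in>{1..k}. w i)) (restrict (\<lambda>i. X i \<omega>) {1..k})
        then \<psi> ((\<lambda>w. \<Sum>i\<in>{1..k}. w i) (restrict (\<lambda>i. X i \<omega>) {1..k})) else 0) \<partial>M)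
      = (\<integral>\<^sup>+s. ennreal (rr y k s * indicator {y..} s) * \<psi> s \<partial>lborel)" if psim[measurable]: "\<psi> \<in> borel_measurable borel" for \<psi>
  proof -
    have "(\<integral>\<^sup>+\<omega>. (if (\<lambda>w. (\<forall>j<k. (\<Sum>i\<in>{1..j}. w i) < y) \<and> y \<le> (\<Sum>i\<in>{1..k}. w i)) (restrict (\<lambda>i. X i \<omega>) {1..k})
        then \<psi> ((\<lambda>w. \<Sum>i\<in>{1..k}. w i) (restrict (\<lambda>i. X i \<omega>) {1..k})) else 0) \<partial>M)
      = (\<integral>\<^sup>+\<omega>. (if (\<forall>j<k. psum X j \<omega> < y) then (\<lambda>s. if y \<le> s then \<psi> s else 0) (psum X k \<omega>) else 0) \<partial>M)"
      by (rule nn_integral_cong) (auto simp: psum_def)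
    also have "\<dots> = (\<integral>\<^sup>+s. ennreal (rr y k s) * (if y \<le> s then \<psi> s else 0) \<partial>lborel)"
      by (rule rr_hyp[OF k(1)]) measurable
    also have "\<dots> = (\<integral>\<^sup>+s. ennreal (rr y k s * indicator {y..} s) * \<psi> s \<partial>lborel)"
      by (rule nn_integral_cong) (auto simp: indicator_def)
    finally show ?thesis .
  qed
  have rkm[measurable]: "rr y k \<in> borel_measurable borel" using rr_meas[OF k(1)] .
  have "(\<integral>\<^sup>+\<omega>. (if (\<forall>j<k. psum X j \<omega> < y) \<and> y \<le> psum X k \<omega> then \<phi> (psum X n \<omega>) else 0) \<partial>M)
    = (\<integral>\<^sup>+\<omega>. (if (\<lambda>w. (\<forall>j<k. (\<Sum>i\<in>{1..j}. w i) < y) \<and> y \<le> (\<Sum>i\<in>{1..k}. w i)) (restrict (\<lambda>i. X i \<omega>) {1..k})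
        then \<phi> ((\<lambda>w. \<Sum>i\<in>{1..k}. w i) (restrict (\<lambda>i. X i \<omega>) {1..k}) + (\<lambda>w. \<Sum>i\<in>{Suc k..n}. w i) (restrict (\<lambda>i. X i \<omega>) {Suc k..n})) else 0) \<partial>M)"
    by (rule nn_integral_cong) (simp only: Peq2 heq veq split[symmetric])
  also have "\<dots> = (\<integral>\<^sup>+z. \<phi> z * (\<integral>\<^sup>+s. ennreal (rr y k s * indicator {y..} s) * ennreal (fdens (n - k) (z - s)) \<partial>lborel) \<partial>lborel)"
    by (rule conv_step[where v="\<lambda>w. \<Sum>i\<in>{Suc k..n}. w i" and g="\<lambda>t. ennreal (fdens (n - k) t)"
          and P="\<lambda>w. (\<forall>j<k. (\<Sum>i\<in>{1..j}. w i) < y) \<and> y \<le> (\<Sum>i\<in>{1..k}. w i)"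
          and h="\<lambda>w. \<Sum>i\<in>{1..k}. w i" and r="\<lambda>s. ennreal (rr y k s * indicator {y..} s)",
          OF ind meas_sum_PiM[OF order_refl] dj pred_Q meas_sum_PiM[OF order_refl] _ hyp])
       auto
  also have "\<dots> = (\<integral>\<^sup>+z. ennreal (ck n k z) * \<phi> z \<partial>lborel)"
    by (rule nn_integral_cong)
       (simp only: conv_real(2)[OF uk_int[OF k(1)] uk_nonneg[OF k(1)] fdens_meas fdens_nonneg fdens_le1] ck_def, simp add: mult.commute)
  finally show ?thesis .
qed

end

context setting
begin

definition Hn :: "nat \<Rightarrow> real \<Rightarrow> real" where
  "Hn n z = rr y n z + (\<Sum>k\<in>{1..<n}. ck n k z)"

lemma Hn_nonneg: "n \<ge> 2 \<Longrightarrow> 0 \<le> Hn n z"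
  unfolding Hn_def using rr_nonneg[of n z] ck_nonneg by (intro add_nonneg_nonneg sum_nonneg) auto

lemma Hn_cont: "n \<ge> 2 \<Longrightarrow> isCont (Hn n) z"
  unfolding Hn_def[abs_def] using rr_cont ck_cont by (intro continuous_intros) auto

lemma Hn_meas: "n \<ge> 2 \<Longrightarrow> Hn n \<in> borel_measurable borel"
  by (intro borel_measurable_continuous_onI continuous_at_imp_continuous_on) (use Hn_cont in auto)

lemma distSn: "n \<ge> 1 \<Longrightarrow> distributed M lborel (psum X n) (\<lambda>z. ennreal (fdens n z))"
proof -
  assume n: "n \<ge> 1"
  have "distributed M lborel (\<lambda>\<omega>. \<Sum>i\<in>{1..n}. X i \<omega>) (\<lambda>z. ennreal (fdens (card {1..n}) z))"
    using n by (intro distS) auto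
  moreover have "(\<lambda>\<omega>. \<Sum>i\<in>{1..n}. X i \<omega>) = psum X n" by (rule ext) (simp add: psum_def)
  ultimately show ?thesis by simp
qed

lemma main_nn:
  assumes n: "n \<ge> 2" and phim[measurable]: "\<phi> \<in> borel_measurable borel"
  shows "(\<integral>\<^sup>+z. ennreal (fdens n z) * \<phi> z \<partial>lborel) = (\<integral>\<^sup>+z. ennreal (Hn n z) * \<phi> z \<partial>lborel)"
proof -
  have rnm[measurable]: "rr y n \<in> borel_measurable borel" using rr_meas n by auto
  have ckm: "k \<in> {1..<n} \<Longrightarrow> (\<lambda>z. ennreal (ck n k z) * \<phi> z) \<in> borel_measurable borel" for k
    using ck_meas[of k n] by (intro borel_measurable_times_ennreal measurable_compose[OF _ measurable_ennreal]) auto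
  have "(\<integral>\<^sup>+z. ennreal (fdens n z) * \<phi> z \<partial>lborel) = (\<integral>\<^sup>+\<omega>. \<phi> (psum X n \<omega>) \<partial>M)"
    using distributed_nn_integral[OF distSn, of n \<phi>] n by simp
  also have "\<dots> = (\<integral>\<^sup>+\<omega>. (if (\<forall>j<n. psum X j \<omega> < y) then \<phi> (psum X n \<omega>) else 0)
     + (\<Sum>k\<in>{1..<n}. if (\<forall>j<k. psum X j \<omega> < y) \<and> y \<le> psum X k \<omega> then \<phi> (psum X n \<omega>) else 0) \<partial>M)"
    by (rule nn_integral_cong) (rule decomp_pt)
  also have "\<dots> = (\<integral>\<^sup>+\<omega>. (if (\<forall>j<n. psum X j \<omega> < y) then \<phi> (psum X n \<omega>) else 0) \<partial>M)
     + (\<Sum>k\<in>{1..<n}. \<integral>\<^sup>+\<omega>. (if (\<forall>j<k. psum X j \<omega> < y) \<and> y \<le> psum X k \<omega> then \<phi> (psum X n \<omega>) else 0) \<partial>M)"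
    by (subst nn_integral_add) (auto simp: nn_integral_sum)
  also have "\<dots> = (\<integral>\<^sup>+z. ennreal (rr y n z) * \<phi> z \<partial>lborel) + (\<Sum>k\<in>{1..<n}. \<integral>\<^sup>+z. ennreal (ck n k z) * \<phi> z \<partial>lborel)"
    using n by (simp add: rr_hyp term_k)
  also have "\<dots> = (\<integral>\<^sup>+z. ennreal (rr y n z) * \<phi> z + (\<Sum>k\<in>{1..<n}. ennreal (ck n k z) * \<phi> z) \<partial>lborel)"
  proof -
    have s: "(\<integral>\<^sup>+z. (\<Sum>k\<in>{1..<n}. ennreal (ck n k z) * \<phi> z) \<partial>lborel) = (\<Sum>k\<in>{1..<n}. \<integral>\<^sup>+z. ennreal (ck n k z) * \<phi> z \<partial>lborel)"
      by (rule nn_integral_sum) (use ckm in auto)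
    have "(\<integral>\<^sup>+z. ennreal (rr y n z) * \<phi> z + (\<Sum>k\<in>{1..<n}. ennreal (ck n k z) * \<phi> z) \<partial>lborel)
       = (\<integral>\<^sup>+z. ennreal (rr y n z) * \<phi> z \<partial>lborel) + (\<integral>\<^sup>+z. (\<Sum>k\<in>{1..<n}. ennreal (ck n k z) * \<phi> z) \<partial>lborel)"
      by (rule nn_integral_add) (use ckm in \<open>auto intro!: borel_measurable_sum\<close>)
    then show ?thesis using s by simp
  qed
  also have "\<dots> = (\<integral>\<^sup>+z. ennreal (Hn n z) * \<phi> z \<partial>lborel)"
  proof (rule nn_integral_cong)
    fix z
    have "ennreal (Hn n z) = ennreal (rr y n z) + (\<Sum>k\<in>{1..<n}. ennreal (ck n k z))"
      unfolding Hn_def using rr_nonneg[of n z] n ck_nonneg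
      by (subst ennreal_plus) (auto intro!: sum_nonneg sum_ennreal[symmetric])
    then show "ennreal (rr y n z) * \<phi> z + (\<Sum>k\<in>{1..<n}. ennreal (ck n k z) * \<phi> z) = ennreal (Hn n z) * \<phi> z"
      by (simp add: distrib_right sum_distrib_right)
  qed
  finally show ?thesis .
qed

lemma fdens_int: assumes n: "n \<ge> 1" shows "integrable lborel (fdens n)"
proof -
  have "(\<integral>\<^sup>+z. ennreal (fdens n z) * 1 \<partial>lborel) = (\<integral>\<^sup>+\<omega>. 1 \<partial>M)"
    using distributed_nn_integral[OF distSn[OF n], of "\<lambda>_. 1"] by simp
  also have "\<dots> = 1" by (simp add: emeasure_space_1)
  finally show ?thesis
    by (intro integrableI_nonneg) (auto simp: fdens_nonneg)
qed

lemma main_pt: assumes n: "n \<ge> 2" shows "fdens n x = Hn n x"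
proof -
  have Hm[measurable]: "Hn n \<in> borel_measurable borel" using Hn_meas[OF n] .
  have fi: "integrable lborel (fdens n)" using fdens_int n by auto
  have Hi: "integrable lborel (Hn n)"
  proof -
    have "(\<integral>\<^sup>+z. ennreal (Hn n z) \<partial>lborel) = (\<integral>\<^sup>+z. ennreal (fdens n z) \<partial>lborel)"
      using main_nn[OF n, of "\<lambda>_. 1"] by simp
    also have "\<dots> < \<infinity>" using fi by (simp add: integrable_iff_bounded fdens_nonneg)
    finally show ?thesis by (intro integrableI_nonneg) (auto simp: Hn_nonneg[OF n])
  qed
  have eq: "(LINT z|lborel. indicator {..t} z * fdens n z) = (LINT z|lborel. indicator {..t} z * Hn n z)" for t
  proof -
    have "ennreal (LINT z|lborel. indicator {..t} z * fdens n z) = (\<integral>\<^sup>+z. ennreal (indicator {..t} z * fdens n z) \<partial>lborel)"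
      by (rule nn_integral_eq_integral[symmetric])
         (use integrable_mult_indicator[of "{..t}" lborel "fdens n"] fi fdens_nonneg in auto)
    also have "\<dots> = (\<integral>\<^sup>+z. ennreal (fdens n z) * indicator {..t} z \<partial>lborel)"
      by (rule nn_integral_cong) (auto simp: indicator_def)
    also have "\<dots> = (\<integral>\<^sup>+z. ennreal (Hn n z) * indicator {..t} z \<partial>lborel)"
      by (rule main_nn[OF n]) measurable
    also have "\<dots> = (\<integral>\<^sup>+z. ennreal (indicator {..t} z * Hn n z) \<partial>lborel)"
      by (rule nn_integral_cong) (auto simp: indicator_def)
    also have "\<dots> = ennreal (LINT z|lborel. indicator {..t} z * Hn n z)"
      by (rule nn_integral_eq_integral)
         (use integrable_mult_indicator[of "{..t}" lborel "Hn n"] Hi Hn_nonneg[OF n] in auto)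
    finally show ?thesis
      by (subst (asm) ennreal_inj)
         (auto intro!: Bochner_Integration.integral_nonneg simp: fdens_nonneg Hn_nonneg[OF n])
  qed
  have d1: "((\<lambda>t. LINT z|lborel. indicator {..t} z * fdens n z) has_field_derivative fdens n x) (at x)"
    by (rule ftc_half[OF fi fdens_cont2[OF n]])
  have d2: "((\<lambda>t. LINT z|lborel. indicator {..t} z * fdens n z) has_field_derivative Hn n x) (at x)"
    unfolding eq by (rule ftc_half[OF Hi Hn_cont[OF n]])
  show ?thesis using DERIV_unique[OF d1 d2] .
qed

lemma ck_integral:
  assumes k: "k \<ge> 1"
  shows "(\<lambda>\<xi>. rr y k (y + \<xi>) * fdens (n - k) (z - y - \<xi>)) integrable_on {0..1}"
    and "ck n k z = integral {0..1} (\<lambda>\<xi>. rr y k (y + \<xi>) * fdens (n - k) (z - y - \<xi>))"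
proof -
  define G where "G \<xi> = rr y k (y + \<xi>) * fdens (n - k) (z - y - \<xi>)" for \<xi>
  define F where "F s = (rr y k s * indicator {y..} s) * fdens (n - k) (z - s)" for s
  have Fi: "integrable lborel F"
    unfolding F_def by (rule conv_real(1)[OF uk_int[OF k] uk_nonneg[OF k] fdens_meas fdens_nonneg fdens_le1])
  have pt: "F (y + 1 * \<xi>) = indicator {0..1} \<xi> * G \<xi>" for \<xi>
  proof (cases "\<xi> \<le> 1")
    case True then show ?thesis by (auto simp: F_def G_def indicator_def algebra_simps)
  next
    case False
    then have "rr y k (y + \<xi>) = 0"
    proof (cases "k \<ge> 2")
      case True then show ?thesis using False by (intro rr_zero) auto
    next
      case False': False
      then have "k = 1" using k by auto
      then show ?thesis using False ypos rr1_zero[of "y + \<xi>"] by simp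
    qed
    then show ?thesis using False by (simp add: F_def G_def indicator_def)
  qed
  have "ck n k z = (LINT s|lborel. F s)" by (simp add: ck_def F_def)
  also have "\<dots> = (LINT \<xi>|lborel. F (y + 1 * \<xi>))"
    using lborel_integral_real_affine[of 1 F y] by simp
  also have "\<dots> = (LINT \<xi>|lborel. indicator {0..1} \<xi> * G \<xi>)" by (simp only: pt)
  finally have e1: "ck n k z = (LINT \<xi>|lborel. indicator {0..1} \<xi> * G \<xi>)" .
  have si: "set_integrable lborel {0..1} G"
  proof -
    have "integrable lborel (\<lambda>\<xi>. F (y + 1 * \<xi>))" by (rule lborel_integrable_real_affine[OF Fi]) simp
    then show ?thesis unfolding set_integrable_def by (simp only: pt) simp
  qed
  show "(\<lambda>\<xi>. rr y k (y + \<xi>) * fdens (n - k) (z - y - \<xi>)) integrable_on {0..1}"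
    using set_borel_integral_eq_integral(1)[OF si] by (simp add: G_def[abs_def])
  show "ck n k z = integral {0..1} (\<lambda>\<xi>. rr y k (y + \<xi>) * fdens (n - k) (z - y - \<xi>))"
    using set_borel_integral_eq_integral(2)[OF si] e1 by (simp add: G_def[abs_def] set_lebesgue_integral_def)
qed

end

theorem lemma4:
  fixes M :: "'a measure" and X :: "nat \<Rightarrow> 'a \<Rightarrow> real"
    and n :: nat and x y a :: real
  assumes "prob_space M"
    and "prob_space.indep_vars M (\<lambda>_. borel) X {1..}"
    and "\<And>i. i \<ge> 1 \<Longrightarrow>
           distributed M lborel (X i) (\<lambda>t. ennreal (if t \<le> 1 then exp (t - 1) else 0))"
    and "n \<ge> 2" and "y > 0" and "a \<ge> 1"
  shows "Rdens M X n x y = fdens n x - fdens n (y + a)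
    + integral {0..1} (\<lambda>\<xi>. \<Sum>k=1..n-1.
        Rdens M X k (y + \<xi>) y * (fdens (n - k) (a - \<xi>) - fdens (n - k) (x - y - \<xi>)))"
proof -
  interpret setting M X y
    using assms by (intro setting.intro setting_axioms.intro) auto
  have n: "n \<ge> 2" using assms by simp
  have ivl: "{1..n-1} = {1..<n}" using n by auto
  have Rn: "Rdens M X n x y = rr y n x"
    using n by (intro Rdens_eq rr_cont) auto
  have Rk: "Rdens M X k (y + \<xi>) y = rr y k (y + \<xi>)" if k: "k \<in> {1..<n}" and xi: "\<xi> \<in> {0..1} - {1 - y}" for k \<xi>
  proof (cases "k \<ge> 2")
    case True then show ?thesis by (intro Rdens_eq rr_cont) auto
  next
    case False
    then have k1: "k = 1" using k by auto
    have "rr y (Suc 0) = f1" by (rule ext) simp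
    moreover have "isCont f1 (y + \<xi>)" using xi by (intro f1_isCont) auto
    ultimately have "isCont (rr y 1) (y + \<xi>)" by simp
    then show ?thesis using k1 by (intro Rdens_eq) auto
  qed
  have I1: "integral {0..1} (\<lambda>\<xi>. \<Sum>k=1..n-1.
        Rdens M X k (y + \<xi>) y * (fdens (n - k) (a - \<xi>) - fdens (n - k) (x - y - \<xi>)))
     = integral {0..1} (\<lambda>\<xi>. \<Sum>k\<in>{1..<n}.
        rr y k (y + \<xi>) * fdens (n - k) ((y + a) - y - \<xi>) - rr y k (y + \<xi>) * fdens (n - k) (x - y - \<xi>))"
  proof (rule integral_spike[where S="{1 - y}"])
    fix \<xi> assume xi: "\<xi> \<in> {0..1} - {1 - y}"
    show "(\<Sum>k\<in>{1..<n}. rr y k (y + \<xi>) * fdens (n - k) ((y + a) - y - \<xi>) - rr y k (y + \<xi>) * fdens (n - k) (x - y - \<xi>))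
      = (\<Sum>k=1..n-1. Rdens M X k (y + \<xi>) y * (fdens (n - k) (a - \<xi>) - fdens (n - k) (x - y - \<xi>)))"
      unfolding ivl
    proof (intro sum.cong refl)
      fix k assume k: "k \<in> {1..<n}"
      show "rr y k (y + \<xi>) * fdens (n - k) ((y + a) - y - \<xi>) - rr y k (y + \<xi>) * fdens (n - k) (x - y - \<xi>)
        = Rdens M X k (y + \<xi>) y * (fdens (n - k) (a - \<xi>) - fdens (n - k) (x - y - \<xi>))"
        unfolding Rk[OF k xi] by (simp add: right_diff_distrib)
    qed
  qed simp
  also have "\<dots> = (\<Sum>k\<in>{1..<n}. integral {0..1} (\<lambda>\<xi>.
        rr y k (y + \<xi>) * fdens (n - k) ((y + a) - y - \<xi>) - rr y k (y + \<xi>) * fdens (n - k) (x - y - \<xi>)))"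
  proof (rule integral_sum)
    fix k assume k: "k \<in> {1..<n}"
    have h1: "(\<lambda>\<xi>. rr y k (y + \<xi>) * fdens (n - k) ((y + a) - y - \<xi>)) integrable_on {0..1}"
      using k by (intro ck_integral(1)) auto
    have h2: "(\<lambda>\<xi>. rr y k (y + \<xi>) * fdens (n - k) (x - y - \<xi>)) integrable_on {0..1}"
      using k by (intro ck_integral(1)) auto
    show "(\<lambda>\<xi>. rr y k (y + \<xi>) * fdens (n - k) ((y + a) - y - \<xi>) - rr y k (y + \<xi>) * fdens (n - k) (x - y - \<xi>)) integrable_on {0..1}"
      by (rule integrable_diff[OF h1 h2])
  qed simp
  also have "\<dots> = (\<Sum>k\<in>{1..<n}. ck n k (y + a) - ck n k x)"
  proof (intro sum.cong refl)
    fix k assume k: "k \<in> {1..<n}"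
    have h1: "(\<lambda>\<xi>. rr y k (y + \<xi>) * fdens (n - k) ((y + a) - y - \<xi>)) integrable_on {0..1}"
      using k by (intro ck_integral(1)) auto
    have h2: "(\<lambda>\<xi>. rr y k (y + \<xi>) * fdens (n - k) (x - y - \<xi>)) integrable_on {0..1}"
      using k by (intro ck_integral(1)) auto
    have e1: "ck n k (y + a) = integral {0..1} (\<lambda>\<xi>. rr y k (y + \<xi>) * fdens (n - k) ((y + a) - y - \<xi>))"
      using k by (intro ck_integral(2)) auto
    have e2: "ck n k x = integral {0..1} (\<lambda>\<xi>. rr y k (y + \<xi>) * fdens (n - k) (x - y - \<xi>))"
      using k by (intro ck_integral(2)) auto
    show "integral {0..1} (\<lambda>\<xi>. rr y k (y + \<xi>) * fdens (n - k) ((y + a) - y - \<xi>) - rr y k (y + \<xi>) * fdens (n - k) (x - y - \<xi>))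
      = ck n k (y + a) - ck n k x"
      unfolding e1 e2 by (rule integral_diff[OF h1 h2])
  qed
  finally have I: "integral {0..1} (\<lambda>\<xi>. \<Sum>k=1..n-1.
        Rdens M X k (y + \<xi>) y * (fdens (n - k) (a - \<xi>) - fdens (n - k) (x - y - \<xi>)))
     = (\<Sum>k\<in>{1..<n}. ck n k (y + a) - ck n k x)" .
  have fx: "fdens n x = rr y n x + (\<Sum>k\<in>{1..<n}. ck n k x)"
    using main_pt[OF n] by (simp add: Hn_def)
  have fa: "fdens n (y + a) = (\<Sum>k\<in>{1..<n}. ck n k (y + a))"
    using main_pt[OF n, of "y + a"] rr_zero[OF n, of "y + a"] assms by (simp add: Hn_def)
  show ?thesis
    unfolding I Rn fx fa by (simp add: sum_subtractf)
qed

end
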